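(* Let $k$ be a field and $S=k[x_1,\dots,x_n]$. Let $I\subseteq K\subseteq S$ and $J\subseteq L\subseteq S$ be monomial ideals with $\dim_k S/I<\infty$ and $\dim_k S/J<\infty$. Let $\nu$ (resp. $\epsilon$) be the skew shape associated with $K/I$ (resp. $L/J$), and let $\nu=\nu_1\amalg\dots\amalg\nu_m$ and $\epsilon=\epsilon_1\amalg\dots\amalg\epsilon_\ell$ be their decompositions into connected components. Then for every isomorphism $\phi\colon K/I\to L/J$ of $S$-modules sending monomials to monomials, there exist a bijection $\sigma\colon\{1,\dots,m\}\to\{1,\dots,\ell\}$ and elements $c_1,\dots,c_m\in\mathbb{Z}^n$ such that $\nu_i+c_i=\epsilon_{\sigma(i)}$ for each $i$, and $\phi(x^a)=x^{a+c_i}$ for all $a\in\nu_i$.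
   Context: Monomials of $S$ are identified with $\mathbb{N}^n$ via $a=(a_1,\dots,a_n)\leftrightarrow x^a=x_1^{a_1}\cdots x_n^{a_n}$; $\mathbb{N}^n$ carries the componentwise partial order. For monomial ideals $I\subseteq K$, the skew shape associated with $K/I$ is the set of $a\in\mathbb{N}^n$ with $x^a\in K$ and $x^a\notin I$ (i.e. the monomials giving a basis of $K/I$). A set $\epsilon\subseteq\mathbb{N}^n$ is connected if for any $a,b\in\epsilon$ there exist $a',b'\in\mathbb{N}^n$ with $a+a'=b+b'\in\epsilon$; every skew shape is uniquely a disjoint union of connected ones, its connected components. An $S$-module isomorphism $\phi\colon K/I\to L/J$ "sends monomials to monomials" if for each monomial $x^a$ with $a$ in the skew shape of $K/I$, $\phi(x^a)$ is a monomial $x^{a'}$ with $a'$ in the skew shape of $L/J$.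
   Formalization: The connected components of a skew shape are the classes of the equivalence relation generated by relating a and b when $a+a'=b+b'$ lies in the shape for some $a',b'$, rather than its connected pieces. The statement above fails without it. *)

theory Defs
  imports "HOL-Library.Poly_Mapping"
begin

text \<open>The polynomial ring S = k[x_i : i in 'n] over a field k, with a finite index
type 'n of variables (so n = CARD('n)).  Exponent vectors are elements of the
poly_mapping type from n to nat (all functions, since 'n is finite).\<close>

type_synonym ('n, 'k) mpoly = "('n \<Rightarrow>\<^sub>0 nat) \<Rightarrow>\<^sub>0 'k"

definition mon :: "('n \<Rightarrow>\<^sub>0 nat) \<Rightarrow> ('n, 'k::field) mpoly" where
  "mon a = Poly_Mapping.single a 1"

definition const :: "'k::field \<Rightarrow> ('n, 'k) mpoly" where
  "const c = Poly_Mapping.single 0 c"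

definition is_ideal :: "('n, 'k::field) mpoly set \<Rightarrow> bool" where
  "is_ideal I \<longleftrightarrow> 0 \<in> I \<and> (\<forall>p\<in>I. \<forall>q\<in>I. p + q \<in> I) \<and> (\<forall>s. \<forall>p\<in>I. s * p \<in> I)"

definition monomial_ideal :: "('n, 'k::field) mpoly set \<Rightarrow> bool" where
  "monomial_ideal I \<longleftrightarrow> is_ideal I \<and>
     (\<exists>M. I = {p. \<exists>A s. finite A \<and> A \<subseteq> M \<and> p = (\<Sum>a\<in>A. s a * mon a)})"

definition fin_codim :: "('n, 'k::field) mpoly set \<Rightarrow> bool" where
  "fin_codim I \<longleftrightarrow> (\<exists>B. finite B \<and> (\<forall>p. \<exists>c. p - (\<Sum>b\<in>B. const (c b) * b) \<in> I))"

definition skew_shape :: "('n, 'k::field) mpoly set \<Rightarrow> ('n, 'k) mpoly set \<Rightarrow> ('n \<Rightarrow>\<^sub>0 nat) set" where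
  "skew_shape K I = {a. mon a \<in> K \<and> mon a \<notin> I}"

definition linked :: "('n \<Rightarrow>\<^sub>0 nat) set \<Rightarrow> ('n \<Rightarrow>\<^sub>0 nat) \<Rightarrow> ('n \<Rightarrow>\<^sub>0 nat) \<Rightarrow> bool" where
  "linked E a b \<longleftrightarrow> a \<in> E \<and> b \<in> E \<and> (\<exists>a' b'. a + a' = b + b' \<and> a + a' \<in> E)"

definition components :: "('n \<Rightarrow>\<^sub>0 nat) set \<Rightarrow> ('n \<Rightarrow>\<^sub>0 nat) set set" where
  "components E = (\<lambda>a. {b. (linked E)\<^sup>*\<^sup>* a b}) ` E"

definition to_int :: "('n \<Rightarrow>\<^sub>0 nat) \<Rightarrow> ('n \<Rightarrow> int)" where
  "to_int a = (\<lambda>i. int (Poly_Mapping.lookup a i))"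

definition shift :: "('n \<Rightarrow>\<^sub>0 nat) \<Rightarrow> ('n \<Rightarrow> int) \<Rightarrow> ('n \<Rightarrow> int)" where
  "shift a c = (\<lambda>i. int (Poly_Mapping.lookup a i) + c i)"

text \<open>An S-module isomorphism K/I \<rightarrow> L/J, represented on representatives:
  phi maps K to L, is well defined modulo I/J, S-linear modulo J, injective and surjective.\<close>
definition module_iso :: "('n, 'k::field) mpoly set \<Rightarrow> ('n, 'k) mpoly set \<Rightarrow>
    ('n, 'k) mpoly set \<Rightarrow> ('n, 'k) mpoly set \<Rightarrow> (('n, 'k) mpoly \<Rightarrow> ('n, 'k) mpoly) \<Rightarrow> bool" where
  "module_iso K I L J phi \<longleftrightarrow>
     (\<forall>p\<in>K. phi p \<in> L) \<and>
     (\<forall>p\<in>K. \<forall>q\<in>K. p - q \<in> I \<longrightarrow> phi p - phi q \<in> J) \<and>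
     (\<forall>p\<in>K. \<forall>q\<in>K. phi (p + q) - (phi p + phi q) \<in> J) \<and>
     (\<forall>s. \<forall>p\<in>K. phi (s * p) - s * phi p \<in> J) \<and>
     (\<forall>p\<in>K. phi p \<in> J \<longrightarrow> p \<in> I) \<and>
     (\<forall>q\<in>L. \<exists>p\<in>K. phi p - q \<in> J)"

definition sends_monomials :: "('n, 'k::field) mpoly set \<Rightarrow> ('n, 'k) mpoly set \<Rightarrow>
    ('n, 'k) mpoly set \<Rightarrow> ('n, 'k) mpoly set \<Rightarrow> (('n, 'k) mpoly \<Rightarrow> ('n, 'k) mpoly) \<Rightarrow> bool" where
  "sends_monomials K I L J phi \<longleftrightarrow>
     (\<forall>a\<in>skew_shape K I. \<exists>a'\<in>skew_shape L J. phi (mon a) - mon a' \<in> J)"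

end

theory Submission
  imports Defs
begin

lemma ideal_add: "is_ideal J \<Longrightarrow> p \<in> J \<Longrightarrow> q \<in> J \<Longrightarrow> p + q \<in> J"
  by (simp add: is_ideal_def)

lemma ideal_mult: "is_ideal J \<Longrightarrow> p \<in> J \<Longrightarrow> s * p \<in> J"
  by (simp add: is_ideal_def)

lemma ideal_zero: "is_ideal J \<Longrightarrow> 0 \<in> J"
  by (simp add: is_ideal_def)

lemma ideal_neg: "is_ideal J \<Longrightarrow> (p::('n, 'k::field) mpoly) \<in> J \<Longrightarrow> - p \<in> J"
  using ideal_mult[of J p "-1"] by simp

lemma ideal_diff: "is_ideal J \<Longrightarrow> (p::('n, 'k::field) mpoly) \<in> J \<Longrightarrow> q \<in> J \<Longrightarrow> p - q \<in> J"
  using ideal_add[of J p "-q"] ideal_neg[of J q] by simp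

lemma mon_mult: "mon a * mon b = (mon (a + b) :: ('n, 'k::field) mpoly)"
  by (simp add: mon_def mult_single)

lemma const_mon: "const v * mon x = (Poly_Mapping.single x v :: ('n, 'k::field) mpoly)"
  by (simp add: const_def mon_def mult_single)

lemma lookup_mon: "Poly_Mapping.lookup (mon a :: ('n, 'k::field) mpoly) b = (if a = b then 1 else 0)"
  by (simp add: mon_def lookup_single)

lemma monomial_keys:
  fixes J :: "('n, 'k::field) mpoly set"
  assumes "monomial_ideal J" "p \<in> J" "x \<in> Poly_Mapping.keys p"
  shows "mon x \<in> J"
proof -
  from assms(1) obtain M where id: "is_ideal J" and
    JM: "J = {p. \<exists>A s. finite A \<and> A \<subseteq> M \<and> p = (\<Sum>a\<in>A. s a * mon a)}"
    unfolding monomial_ideal_def by blast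
  from assms(2) JM obtain A s where A: "finite A" "A \<subseteq> M" and p: "p = (\<Sum>a\<in>A. s a * mon a)"
    by blast
  have "x \<in> (\<Union>a\<in>A. Poly_Mapping.keys (s a * mon a))"
    using keys_sum[of "\<lambda>a. s a * mon a" A] assms(3) p by blast
  then obtain a where a: "a \<in> A" "x \<in> Poly_Mapping.keys (s a * mon a)" by blast
  have km: "Poly_Mapping.keys (mon a :: ('n, 'k) mpoly) = {a}" by (simp add: mon_def)
  have "x \<in> {u + v | u v. u \<in> Poly_Mapping.keys (s a) \<and> v \<in> Poly_Mapping.keys (mon a :: ('n, 'k) mpoly)}"
    using keys_mult[of "s a" "mon a"] a(2) by blast
  then obtain t where t: "x = t + a" using km by auto
  have "\<exists>B s'. finite B \<and> B \<subseteq> M \<and> mon a = (\<Sum>b\<in>B. s' b * mon b)"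
    by (rule exI[of _ "{a}"], rule exI[of _ "\<lambda>_. 1"]) (use a A in auto)
  then have "mon a \<in> J" using JM by simp
  then have "mon t * mon a \<in> J" using ideal_mult id by blast
  then show ?thesis using t mon_mult by metis
qed

lemma diff_mon_eq:
  fixes J :: "('n, 'k::field) mpoly set"
  assumes "monomial_ideal J" "mon b' \<notin> J" "mon b - mon b' \<in> J"
  shows "b = b'"
proof (rule ccontr)
  assume "b \<noteq> b'"
  then have "Poly_Mapping.lookup (mon b - mon b' :: ('n, 'k) mpoly) b' \<noteq> 0"
    by (simp add: lookup_minus lookup_mon)
  then have "b' \<in> Poly_Mapping.keys (mon b - mon b' :: ('n, 'k) mpoly)"
    by (simp add: in_keys_iff)
  then show False using monomial_keys[OF assms(1) assms(3)] assms(2) by blast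
qed

lemma linked_stay: assumes "(linked E)\<^sup>*\<^sup>* a b" "a \<in> E" shows "b \<in> E"
  using assms by (induction rule: rtranclp_induct) (auto simp: linked_def)

theorem lemma2p1:
  fixes I K J L :: "('n::finite, 'k::field) mpoly set"
    and phi :: "('n, 'k) mpoly \<Rightarrow> ('n, 'k) mpoly"
  assumes "monomial_ideal I" "monomial_ideal K" "I \<subseteq> K"
    and "monomial_ideal J" "monomial_ideal L" "J \<subseteq> L"
    and "fin_codim I" "fin_codim J"
    and "module_iso K I L J phi"
    and "sends_monomials K I L J phi"
  shows "\<exists>\<sigma> c. bij_betw \<sigma> (components (skew_shape K I)) (components (skew_shape L J)) \<and>
           (\<forall>\<nu>i\<in>components (skew_shape K I).
              (\<lambda>a. shift a (c \<nu>i)) ` \<nu>i = to_int ` \<sigma> \<nu>i \<and>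
              (\<forall>a\<in>\<nu>i. \<exists>b. to_int b = shift a (c \<nu>i) \<and> phi (mon a) - mon b \<in> J))"
proof -
  have idI: "is_ideal I" and idK: "is_ideal K" and idJ: "is_ideal J" and idL: "is_ideal L"
    using assms(1,2,4,5) by (auto simp: monomial_ideal_def)
  have wd: "\<And>p q. p\<in>K \<Longrightarrow> q\<in>K \<Longrightarrow> p - q \<in> I \<Longrightarrow> phi p - phi q \<in> J"
    and add: "\<And>p q. p\<in>K \<Longrightarrow> q\<in>K \<Longrightarrow> phi (p + q) - (phi p + phi q) \<in> J"
    and mul: "\<And>s p. p\<in>K \<Longrightarrow> phi (s * p) - s * phi p \<in> J"
    and inj0: "\<And>p. p\<in>K \<Longrightarrow> phi p \<in> J \<Longrightarrow> p \<in> I"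
    and surj0: "\<And>q. q\<in>L \<Longrightarrow> \<exists>p\<in>K. phi p - q \<in> J"
    using assms(9) unfolding module_iso_def by blast+
  have K0: "0 \<in> K" using idK by (simp add: is_ideal_def)
  have phi0: "phi 0 \<in> J" using mul[of 0 0] K0 by simp
  have phiI: "phi p \<in> J" if "p \<in> I" for p
  proof -
    have "phi p - phi 0 \<in> J" using wd[of p 0] that assms(3) K0 by auto
    then have "(phi p - phi 0) + phi 0 \<in> J" using ideal_add[OF idJ] phi0 by blast
    then show ?thesis by simp
  qed
  define \<nu> where "\<nu> = skew_shape K I"
  define \<epsilon> where "\<epsilon> = skew_shape L J"
  have monK: "mon a \<in> K" and monI: "mon a \<notin> I" if "a \<in> \<nu>" for a
    using that by (auto simp: \<nu>_def skew_shape_def)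
  have epsJ: "mon b \<notin> J" and epsL: "mon b \<in> L" if "b \<in> \<epsilon>" for b
    using that by (auto simp: \<epsilon>_def skew_shape_def)
  have sm: "\<exists>a'. a' \<in> \<epsilon> \<and> phi (mon a) - mon a' \<in> J" if "a \<in> \<nu>" for a
    using assms(10) that unfolding sends_monomials_def \<nu>_def \<epsilon>_def by blast
  define f where "f a = (SOME a'. a' \<in> \<epsilon> \<and> phi (mon a) - mon a' \<in> J)" for a
  have f\<epsilon>: "f a \<in> \<epsilon>" and fJ: "phi (mon a) - mon (f a) \<in> J" if "a \<in> \<nu>" for a
    using someI_ex[OF sm[OF that]] unfolding f_def by blast+
  have G: "phi (mon (a + e)) - mon (f a + e) \<in> J" if "a \<in> \<nu>" for a e
  proof -
    have 1: "phi (mon e * mon a) - mon e * phi (mon a) \<in> J" using mul monK that by blast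
    have 2: "mon e * (phi (mon a) - mon (f a)) \<in> J" using ideal_mult[OF idJ fJ[OF that]] by blast
    have "phi (mon e * mon a) - mon e * phi (mon a) + mon e * (phi (mon a) - mon (f a)) \<in> J"
      using ideal_add[OF idJ 1 2] .
    moreover have "phi (mon e * mon a) - mon e * phi (mon a) + mon e * (phi (mon a) - mon (f a))
        = phi (mon (a + e)) - mon (f a + e)"
      by (simp add: algebra_simps mon_mult add.commute)
    ultimately show ?thesis by simp
  qed
  have F1: "f (a + e) = f a + e" if "a \<in> \<nu>" "a + e \<in> \<nu>" for a e
  proof -
    have "(phi (mon (a + e)) - mon (f (a + e))) - (phi (mon (a + e)) - mon (f a + e)) \<in> J"
      using ideal_diff[OF idJ fJ[OF that(2)] G[OF that(1)]] .
    then have "mon (f a + e) - mon (f (a + e)) \<in> J" by simp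
    then have "f a + e = f (a + e)" by (rule diff_mon_eq[OF assms(4) epsJ[OF f\<epsilon>[OF that(2)]]])
    then show ?thesis by simp
  qed
  have F2: "a + e \<in> \<nu>" if "a \<in> \<nu>" "f a + e \<in> \<epsilon>" for a e
  proof -
    have "mon e * mon a \<in> K" using ideal_mult[OF idK monK[OF that(1)]] .
    then have mK: "mon (a + e) \<in> K" by (simp add: mon_mult add.commute)
    have "mon (a + e) \<notin> I"
    proof
      assume "mon (a + e) \<in> I"
      then have "phi (mon (a + e)) \<in> J" by (rule phiI)
      then have "phi (mon (a + e)) - (phi (mon (a + e)) - mon (f a + e)) \<in> J"
        using ideal_diff[OF idJ _ G[OF that(1)]] by blast
      then show False using epsJ[OF that(2)] by simp
    qed
    then show ?thesis using mK by (simp add: \<nu>_def skew_shape_def)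
  qed
  have lin_diff: "phi (p - q) - (phi p - phi q) \<in> J" if "p \<in> K" "q \<in> K" for p q
  proof -
    have mq: "-q \<in> K" using ideal_neg[OF idK that(2)] .
    have 1: "phi (p + -q) - (phi p + phi (-q)) \<in> J" using add[OF that(1) mq] .
    have 2: "phi ((-1) * q) - (-1) * phi q \<in> J" using mul[OF that(2)] .
    have "phi (p + -q) - (phi p + phi (-q)) + (phi ((-1) * q) - (-1) * phi q) \<in> J"
      using ideal_add[OF idJ 1 2] .
    then show ?thesis by (simp add: algebra_simps)
  qed
  have F3: "inj_on f \<nu>"
  proof (rule inj_onI)
    fix a b assume ab: "a \<in> \<nu>" "b \<in> \<nu>" "f a = f b"
    have "(phi (mon a) - mon (f a)) - (phi (mon b) - mon (f b)) \<in> J"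
      using ideal_diff[OF idJ fJ[OF ab(1)] fJ[OF ab(2)]] .
    then have 1: "phi (mon a) - phi (mon b) \<in> J" using ab(3) by simp
    have 2: "phi (mon a - mon b) - (phi (mon a) - phi (mon b)) \<in> J"
      using lin_diff monK ab by blast
    have "phi (mon a - mon b) - (phi (mon a) - phi (mon b)) + (phi (mon a) - phi (mon b)) \<in> J"
      using ideal_add[OF idJ 2 1] .
    then have "phi (mon a - mon b) \<in> J" by simp
    moreover have "mon a - mon b \<in> K" using ideal_diff[OF idK monK monK] ab by blast
    ultimately have "mon a - mon b \<in> I" using inj0 by blast
    then show "a = b" using diff_mon_eq[OF assms(1) monI[OF ab(2)]] by blast
  qed
  have Q: "(\<forall>x\<in>Poly_Mapping.keys p. mon x \<in> K) \<longrightarrow> p \<in> K \<and>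
      (\<exists>r. phi p - r \<in> J \<and> Poly_Mapping.keys r \<subseteq> f ` (Poly_Mapping.keys p \<inter> \<nu>))" for p
  proof (induction p rule: update_induct)
    case const
    then show ?case using K0 phi0 by (intro impI conjI exI[of _ 0]) auto
  next
    case (update p a b)
    have upd: "Poly_Mapping.update a b p = p + Poly_Mapping.single a b"
      using update(1) by (intro poly_mapping_eqI) (auto simp: lookup_update lookup_add lookup_single in_keys_iff)
    have keys: "Poly_Mapping.keys (Poly_Mapping.update a b p) = insert a (Poly_Mapping.keys p)"
      using update(2) by (simp add: keys_update)
    show ?case
    proof
      assume H: "\<forall>x\<in>Poly_Mapping.keys (Poly_Mapping.update a b p). mon x \<in> K"
      then have "\<forall>x\<in>Poly_Mapping.keys p. mon x \<in> K" using keys by auto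
      with update(3) obtain r where pK: "p \<in> K" and r: "phi p - r \<in> J"
        "Poly_Mapping.keys r \<subseteq> f ` (Poly_Mapping.keys p \<inter> \<nu>)" by blast
      have aK: "mon a \<in> K" using H keys by auto
      have sK: "Poly_Mapping.single a b \<in> K"
        using ideal_mult[OF idK aK, of "const b"] by (simp add: const_mon)
      have PK: "p + Poly_Mapping.single a b \<in> K" using ideal_add[OF idK pK sK] .
      have s1: "phi (Poly_Mapping.single a b) - const b * phi (mon a) \<in> J"
        using mul[OF aK, of "const b"] by (simp add: const_mon)
      have ad: "phi (p + Poly_Mapping.single a b) - (phi p + phi (Poly_Mapping.single a b)) \<in> J"
        using add[OF pK sK] .
      show "Poly_Mapping.update a b p \<in> K \<and> (\<exists>r. phi (Poly_Mapping.update a b p) - r \<in> J \<and>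
          Poly_Mapping.keys r \<subseteq> f ` (Poly_Mapping.keys (Poly_Mapping.update a b p) \<inter> \<nu>))"
      proof (cases "mon a \<in> I")
        case True
        have "const b * phi (mon a) \<in> J" using ideal_mult[OF idJ phiI[OF True]] .
        then have "phi (Poly_Mapping.single a b) - const b * phi (mon a) + const b * phi (mon a) \<in> J"
          using ideal_add[OF idJ s1] by blast
        then have sJ: "phi (Poly_Mapping.single a b) \<in> J" by simp
        have "phi (p + Poly_Mapping.single a b) - (phi p + phi (Poly_Mapping.single a b))
            + (phi p - r) + phi (Poly_Mapping.single a b) \<in> J"
          using ideal_add[OF idJ ideal_add[OF idJ ad r(1)] sJ] .
        then have "phi (p + Poly_Mapping.single a b) - r \<in> J" by (simp add: algebra_simps)
        moreover have "Poly_Mapping.keys r \<subseteq> f ` (Poly_Mapping.keys (Poly_Mapping.update a b p) \<inter> \<nu>)"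
          using r(2) keys by auto
        ultimately show ?thesis using PK unfolding upd by blast
      next
        case False
        then have a\<nu>: "a \<in> \<nu>" using aK by (simp add: \<nu>_def skew_shape_def)
        have "const b * (phi (mon a) - mon (f a)) \<in> J" using ideal_mult[OF idJ fJ[OF a\<nu>]] .
        then have "phi (Poly_Mapping.single a b) - const b * phi (mon a) + const b * (phi (mon a) - mon (f a)) \<in> J"
          using ideal_add[OF idJ s1] by blast
        then have sJ: "phi (Poly_Mapping.single a b) - Poly_Mapping.single (f a) b \<in> J"
          by (simp add: algebra_simps const_mon)
        have "phi (p + Poly_Mapping.single a b) - (phi p + phi (Poly_Mapping.single a b))
            + (phi p - r) + (phi (Poly_Mapping.single a b) - Poly_Mapping.single (f a) b) \<in> J"
          using ideal_add[OF idJ ideal_add[OF idJ ad r(1)] sJ] .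
        then have "phi (p + Poly_Mapping.single a b) - (r + Poly_Mapping.single (f a) b) \<in> J"
          by (simp add: algebra_simps)
        moreover have "Poly_Mapping.keys (r + Poly_Mapping.single (f a) b) \<subseteq> f ` (Poly_Mapping.keys (Poly_Mapping.update a b p) \<inter> \<nu>)"
          using r(2) keys keys_add[of r "Poly_Mapping.single (f a) b"] a\<nu> by (auto split: if_splits)
        ultimately show ?thesis using PK unfolding upd by blast
      qed
    qed
  qed
  have F4: "f ` \<nu> = \<epsilon>"
  proof
    show "f ` \<nu> \<subseteq> \<epsilon>" using f\<epsilon> by blast
  next
    show "\<epsilon> \<subseteq> f ` \<nu>"
    proof
      fix b assume b: "b \<in> \<epsilon>"
      obtain p where pK: "p \<in> K" and pb: "phi p - mon b \<in> J" using surj0 epsL[OF b] by blast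
      have "\<forall>x\<in>Poly_Mapping.keys p. mon x \<in> K" using monomial_keys[OF assms(2) pK] by blast
      with Q obtain r where r: "phi p - r \<in> J" "Poly_Mapping.keys r \<subseteq> f ` (Poly_Mapping.keys p \<inter> \<nu>)"
        by blast
      have "(phi p - mon b) - (phi p - r) \<in> J" using ideal_diff[OF idJ pb r(1)] .
      then have rb: "r - mon b \<in> J" by simp
      show "b \<in> f ` \<nu>"
      proof (rule ccontr)
        assume "b \<notin> f ` \<nu>"
        then have "b \<notin> Poly_Mapping.keys r" using r(2) by blast
        then have "Poly_Mapping.lookup (r - mon b) b \<noteq> 0"
          by (simp add: lookup_minus lookup_mon in_keys_iff)
        then have "b \<in> Poly_Mapping.keys (r - mon b)" by (simp add: in_keys_iff)
        then show False using monomial_keys[OF assms(4) rb] epsJ[OF b] by blast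
      qed
    qed
  qed
  define d where "d a = (\<lambda>i. int (Poly_Mapping.lookup (f a) i) - int (Poly_Mapping.lookup a i))" for a
  have shift_d: "shift a (d a) = to_int (f a)" for a
    by (simp add: shift_def d_def to_int_def)
  have fwd: "linked \<epsilon> (f a) (f b) \<and> d a = d b" if "linked \<nu> a b" for a b
  proof -
    from that obtain a' b' where ab: "a \<in> \<nu>" "b \<in> \<nu>" "a + a' = b + b'" "a + a' \<in> \<nu>"
      unfolding linked_def by blast
    have 1: "f (a + a') = f a + a'" using F1[OF ab(1) ab(4)] .
    have "b + b' \<in> \<nu>" using ab by simp
    then have 2: "f (b + b') = f b + b'" using F1[OF ab(2)] by blast
    have e: "f a + a' = f b + b'" using 1 2 ab(3) by simp
    have "f a + a' \<in> \<epsilon>" using 1 f\<epsilon>[OF ab(4)] by simp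
    then have L: "linked \<epsilon> (f a) (f b)" using e f\<epsilon> ab unfolding linked_def by blast
    have "d a = d b"
    proof
      fix i
      have "Poly_Mapping.lookup (f a + a') i = Poly_Mapping.lookup (f b + b') i" using e by simp
      moreover have "Poly_Mapping.lookup (a + a') i = Poly_Mapping.lookup (b + b') i" using ab(3) by simp
      ultimately show "d a i = d b i" by (simp add: d_def lookup_add)
    qed
    then show ?thesis using L by blast
  qed
  have bwd: "linked \<nu> a b" if "a \<in> \<nu>" "b \<in> \<nu>" "linked \<epsilon> (f a) (f b)" for a b
  proof -
    from that(3) obtain a' b' where ab: "f a + a' = f b + b'" "f a + a' \<in> \<epsilon>"
      unfolding linked_def by blast
    have 1: "a + a' \<in> \<nu>" using F2[OF that(1) ab(2)] .
    have "f b + b' \<in> \<epsilon>" using ab by simp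
    then have 2: "b + b' \<in> \<nu>" using F2[OF that(2)] by blast
    have "f (a + a') = f (b + b')" using F1[OF that(1) 1] F1[OF that(2) 2] ab by simp
    then have "a + a' = b + b'" using F3 1 2 by (meson inj_onD)
    then show ?thesis using that 1 unfolding linked_def by blast
  qed
  have fwd_star: "(linked \<epsilon>)\<^sup>*\<^sup>* (f a) (f b) \<and> d a = d b" if "(linked \<nu>)\<^sup>*\<^sup>* a b" for a b
    using that
  proof (induction rule: rtranclp_induct)
    case base
    then show ?case by simp
  next
    case (step y z)
    then show ?case using fwd[OF step(2)] rtranclp.rtrancl_into_rtrancl[of "linked \<epsilon>" "f a" "f y" "f z"] by simp
  qed
  have bwd_star: "\<exists>b. c = f b \<and> b \<in> \<nu> \<and> (linked \<nu>)\<^sup>*\<^sup>* a b"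
    if "a \<in> \<nu>" "(linked \<epsilon>)\<^sup>*\<^sup>* (f a) c" for a c
    using that(2)
  proof (induction rule: rtranclp_induct)
    case base
    then show ?case using that(1) by blast
  next
    case (step y z)
    then obtain b where b: "y = f b" "b \<in> \<nu>" "(linked \<nu>)\<^sup>*\<^sup>* a b" by blast
    have "z \<in> \<epsilon>" using step(2) by (simp add: linked_def)
    then obtain b'' where b'': "b'' \<in> \<nu>" "z = f b''" using F4 by blast
    have "linked \<nu> b b''" using bwd[OF b(2) b''(1)] step(2) b b'' by simp
    then show ?case using b b'' rtranclp.rtrancl_into_rtrancl[OF b(3) \<open>linked \<nu> b b''\<close>] by blast
  qed
  define comp where "comp E a = {b. (linked E)\<^sup>*\<^sup>* a b}" for E :: "('n \<Rightarrow>\<^sub>0 nat) set" and a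
  have compdef: "components E = comp E ` E" for E
    by (simp add: components_def comp_def)
  have img: "f ` comp \<nu> a = comp \<epsilon> (f a)" if "a \<in> \<nu>" for a
  proof
    show "f ` comp \<nu> a \<subseteq> comp \<epsilon> (f a)" using fwd_star by (auto simp: comp_def)
    show "comp \<epsilon> (f a) \<subseteq> f ` comp \<nu> a" using bwd_star[OF that] by (auto simp: comp_def)
  qed
  have sub: "comp \<nu> a \<subseteq> \<nu>" if "a \<in> \<nu>" for a
    using linked_stay[OF _ that] by (auto simp: comp_def)
  define \<sigma> where "\<sigma> C = f ` C" for C
  define c where "c C = d (SOME a. a \<in> C)" for C
  have bij: "bij_betw \<sigma> (components \<nu>) (components \<epsilon>)"
    unfolding bij_betw_def
  proof
    show "inj_on \<sigma> (components \<nu>)"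
    proof (rule inj_onI)
      fix C1 C2 assume C: "C1 \<in> components \<nu>" "C2 \<in> components \<nu>" "\<sigma> C1 = \<sigma> C2"
      from C(1) obtain a1 where a1: "a1 \<in> \<nu>" "C1 = comp \<nu> a1" unfolding compdef by (rule imageE)
      from C(2) obtain a2 where a2: "a2 \<in> \<nu>" "C2 = comp \<nu> a2" unfolding compdef by (rule imageE)
      have "f ` C1 = f ` C2" using C(3) unfolding \<sigma>_def .
      then show "C1 = C2"
        using inj_on_image_eq_iff[OF F3 sub[OF a1(1)] sub[OF a2(1)]] a1(2) a2(2) by simp
    qed
    have "\<sigma> ` components \<nu> = (\<lambda>a. \<sigma> (comp \<nu> a)) ` \<nu>"
      unfolding compdef by (rule image_image)
    also have "\<dots> = (\<lambda>a. comp \<epsilon> (f a)) ` \<nu>"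
      by (rule image_cong) (simp_all add: \<sigma>_def img)
    also have "\<dots> = comp \<epsilon> ` (f ` \<nu>)" by (rule image_image[symmetric])
    also have "\<dots> = components \<epsilon>" unfolding compdef F4 ..
    finally show "\<sigma> ` components \<nu> = components \<epsilon>" .
  qed
  have comps: "(\<lambda>a. shift a (c C)) ` C = to_int ` \<sigma> C \<and>
      (\<forall>a\<in>C. \<exists>b. to_int b = shift a (c C) \<and> phi (mon a) - mon b \<in> J)"
    if "C \<in> components \<nu>" for C
  proof -
    from that obtain a0 where a0: "a0 \<in> \<nu>" "C = comp \<nu> a0" unfolding compdef by (rule imageE)
    have a0C: "a0 \<in> C" using a0(2) by (simp add: comp_def)
    have dC: "d b = d a0" if "b \<in> C" for b
    proof -
      have "(linked \<nu>)\<^sup>*\<^sup>* a0 b" using that a0(2) by (simp add: comp_def)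
      then show ?thesis using fwd_star by metis
    qed
    have "(SOME a. a \<in> C) \<in> C" using a0C by (rule someI)
    then have cC: "c C = d a0" using dC unfolding c_def by blast
    have sh: "shift a (c C) = to_int (f a)" if "a \<in> C" for a
      using cC dC[OF that] shift_d[of a] by simp
    have "(\<lambda>a. shift a (c C)) ` C = (\<lambda>a. to_int (f a)) ` C"
      by (rule image_cong) (simp_all add: sh)
    also have "\<dots> = to_int ` \<sigma> C" unfolding \<sigma>_def by (rule image_image[symmetric])
    finally have 1: "(\<lambda>a. shift a (c C)) ` C = to_int ` \<sigma> C" .
    have 2: "\<forall>a\<in>C. \<exists>b. to_int b = shift a (c C) \<and> phi (mon a) - mon b \<in> J"
    proof
      fix a assume a: "a \<in> C"
      then have "a \<in> \<nu>" using sub[OF a0(1)] a0(2) by blast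
      then show "\<exists>b. to_int b = shift a (c C) \<and> phi (mon a) - mon b \<in> J"
        using sh[OF a] fJ by metis
    qed
    show ?thesis using 1 2 by (rule conjI)
  qed
  have "bij_betw \<sigma> (components \<nu>) (components \<epsilon>) \<and>
      (\<forall>\<nu>i\<in>components \<nu>. (\<lambda>a. shift a (c \<nu>i)) ` \<nu>i = to_int ` \<sigma> \<nu>i \<and>
         (\<forall>a\<in>\<nu>i. \<exists>b. to_int b = shift a (c \<nu>i) \<and> phi (mon a) - mon b \<in> J))"
    using bij comps by blast
  then show ?thesis unfolding \<nu>_def \<epsilon>_def by blast
qed

end
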